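(* Let $\mathcal{X}$ be a hereditary class with speed above the Bell number and finite distinguishing number $k_{\mathcal{X}}$, and let $\ell_{\mathcal{X}},d_{\mathcal{X}},c_{\mathcal{X}}$ be constants such that every $G\in\mathcal{X}$ contains an induced subgraph $G'$ which is a strong $(\ell_{\mathcal{X}},d_{\mathcal{X}})$-graph with $|V(G)\setminus V(G')|<c_{\mathcal{X}}$. Then for each positive integer $m$, the class $\mathcal{X}$ contains a graph isomorphic to $G_{w,H}(1,2,\dots,m)$ for some graph $H$ with loops allowed having at most $\ell_{\mathcal{X}}$ vertices and some word $w$ of length $m$ over $V(H)$ (an $\ell_{\mathcal{X}}$-factor of order $m$).
   Context: Hereditary classes are closed under isomorphism and induced subgraphs. Speed above the Bell number: number of graphs in $\mathcal{X}$ on $\{1,\dots,n\}$ is at least $n^{(1-o(1))n}$. Distinguishing number: for $X\subseteq V(G)$, disjoint sets $U_1,\dots,U_m$ are distinguished by $X$ if vertices of the same $U_i$ have the same neighbourhood in $X$ and vertices of different $U_i$ different ones; $k_{\mathcal{X}}<\infty$ means there are $k,m$ such that no vertex subset of any graph in $\mathcal{X}$ distinguishes more than $m$ sets of size at least $k$ (such constants $\ell_{\mathcal{X}},d_{\mathcal{X}},c_{\mathcal{X}}$ then exist). $(\ell,d)$-partition of $V(G)$: at most $\ell$ bags such that for every (not necessarily distinct) pair of bags $(V_i,V_j)$, either every vertex of $V_i$ has at most $d$ neighbours in $V_j$ and vice versa, or every vertex of $V_i$ has at most $d$ non-neighbours in $V_j\setminus\{\text{itself}\}$ and vice versa; strong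 if each bag has at least $5\cdot2^\ell d$ vertices; a strong $(\ell,d)$-graph admits a strong $(\ell,d)$-partition. For a graph $H$ with loops allowed on $A$, a word $w$ over $A$ and positive integers $u_1<\dots<u_k\le|w|$, $G_{w,H}(u_1,\dots,u_k)$ has vertex set $\{u_i\}$ and $u_iu_j$ is an edge iff ($|u_i-u_j|=1$ and $w_{u_i}w_{u_j}\notin E(H)$) or ($|u_i-u_j|>1$ and $w_{u_i}w_{u_j}\in E(H)$) (loops for equal letters). *)

theory Defs
  imports Complex_Main
begin

text \<open>Finite simple graphs with natural-number vertices: a pair (V, E) where E is a
  symmetric irreflexive set of ordered pairs of vertices of V.\<close>

type_synonym ugraph = "nat set \<times> (nat \<times> nat) set"

definition verts :: "ugraph \<Rightarrow> nat set" where "verts G = fst G"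
definition edges :: "ugraph \<Rightarrow> (nat \<times> nat) set" where "edges G = snd G"

definition is_graph :: "ugraph \<Rightarrow> bool" where
  "is_graph G \<longleftrightarrow> finite (verts G) \<and> edges G \<subseteq> verts G \<times> verts G
     \<and> (\<forall>u v. (u, v) \<in> edges G \<longrightarrow> (v, u) \<in> edges G)
     \<and> (\<forall>v. (v, v) \<notin> edges G)"

definition induced :: "ugraph \<Rightarrow> nat set \<Rightarrow> ugraph" where
  "induced G S = (S, edges G \<inter> (S \<times> S))"

definition nbhd :: "ugraph \<Rightarrow> nat \<Rightarrow> nat set" where
  "nbhd G v = {u. (v, u) \<in> edges G}"

definition graph_iso :: "ugraph \<Rightarrow> ugraph \<Rightarrow> bool" where
  "graph_iso G G' \<longleftrightarrow> (\<exists>f. bij_betw f (verts G) (verts G') \<and>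
     (\<forall>u\<in>verts G. \<forall>v\<in>verts G. (u, v) \<in> edges G \<longleftrightarrow> (f u, f v) \<in> edges G'))"

definition hereditary :: "ugraph set \<Rightarrow> bool" where
  "hereditary \<X> \<longleftrightarrow> (\<forall>G\<in>\<X>. is_graph G)
     \<and> (\<forall>G G'. G \<in> \<X> \<longrightarrow> is_graph G' \<longrightarrow> graph_iso G G' \<longrightarrow> G' \<in> \<X>)
     \<and> (\<forall>G S. G \<in> \<X> \<longrightarrow> S \<subseteq> verts G \<longrightarrow> induced G S \<in> \<X>)"

definition speed :: "ugraph set \<Rightarrow> nat \<Rightarrow> nat" where
  "speed \<X> n = card {E. ({1..n}, E) \<in> \<X>}"

definition speed_above_bell :: "ugraph set \<Rightarrow> bool" where
  "speed_above_bell \<X> \<longleftrightarrow> (\<forall>\<epsilon>>0. eventually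
     (\<lambda>n. real (speed \<X> n) \<ge> real n powr ((1 - \<epsilon>) * real n)) sequentially)"

definition distinguishes :: "ugraph \<Rightarrow> nat set \<Rightarrow> nat set set \<Rightarrow> bool" where
  "distinguishes G X \<U> \<longleftrightarrow>
     (\<forall>U\<in>\<U>. U \<subseteq> verts G - X) \<and>
     (\<forall>U\<in>\<U>. \<forall>U'\<in>\<U>. U \<noteq> U' \<longrightarrow> U \<inter> U' = {}) \<and>
     (\<forall>U\<in>\<U>. \<forall>u\<in>U. \<forall>v\<in>U. nbhd G u \<inter> X = nbhd G v \<inter> X) \<and>
     (\<forall>U\<in>\<U>. \<forall>U'\<in>\<U>. U \<noteq> U' \<longrightarrow> (\<forall>u\<in>U. \<forall>v\<in>U'. nbhd G u \<inter> X \<noteq> nbhd G v \<inter> X))"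

definition finite_distinguishing_number :: "ugraph set \<Rightarrow> bool" where
  "finite_distinguishing_number \<X> \<longleftrightarrow> (\<exists>k m::nat. \<forall>G\<in>\<X>. \<forall>X \<subseteq> verts G. \<forall>\<U>.
     distinguishes G X \<U> \<and> (\<forall>U\<in>\<U>. card U \<ge> k) \<longrightarrow> finite \<U> \<and> card \<U> \<le> m)"

definition ld_partition :: "ugraph \<Rightarrow> nat \<Rightarrow> nat \<Rightarrow> nat set set \<Rightarrow> bool" where
  "ld_partition G l d P \<longleftrightarrow>
     \<Union>P = verts G \<and> {} \<notin> P \<and> (\<forall>A\<in>P. \<forall>B\<in>P. A \<noteq> B \<longrightarrow> A \<inter> B = {}) \<and>
     finite P \<and> card P \<le> l \<and>
     (\<forall>A\<in>P. \<forall>B\<in>P.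
        ((\<forall>v\<in>A. card (nbhd G v \<inter> B) \<le> d) \<and> (\<forall>v\<in>B. card (nbhd G v \<inter> A) \<le> d)) \<or>
        ((\<forall>v\<in>A. card (B - nbhd G v - {v}) \<le> d) \<and> (\<forall>v\<in>B. card (A - nbhd G v - {v}) \<le> d)))"

definition strong_ld_partition :: "ugraph \<Rightarrow> nat \<Rightarrow> nat \<Rightarrow> nat set set \<Rightarrow> bool" where
  "strong_ld_partition G l d P \<longleftrightarrow> ld_partition G l d P \<and>
     (\<forall>A\<in>P. card A \<ge> 5 * 2 ^ l * d)"

definition strong_ld_graph :: "ugraph \<Rightarrow> nat \<Rightarrow> nat \<Rightarrow> bool" where
  "strong_ld_graph G l d \<longleftrightarrow> (\<exists>P. strong_ld_partition G l d P)"

text \<open>G_{w,H}(1,...,m) with m = length w: H has vertex set A (letters) and a symmetric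
  edge relation EH on A, loops allowed; w is a word over A (positions 1-based).\<close>
definition factor_graph :: "(nat \<times> nat) set \<Rightarrow> nat list \<Rightarrow> ugraph" where
  "factor_graph EH w = ({1..length w},
     {(i, j). i \<in> {1..length w} \<and> j \<in> {1..length w} \<and> i \<noteq> j \<and>
        ((nat \<bar>int i - int j\<bar> = 1 \<and> (w ! (i - 1), w ! (j - 1)) \<notin> EH) \<or>
         (nat \<bar>int i - int j\<bar> > 1 \<and> (w ! (i - 1), w ! (j - 1)) \<in> EH))})"

end

theory Submission
  imports Defs "HOL-Library.FuncSet"
begin


lemma walk_relpow:
  assumes "\<forall>i<n. (f i, f (Suc i)) \<in> R" "i + k \<le> n"
  shows "(f i, f (i+k)) \<in> R^^k"
  using assms(2)
proof (induction k)
  case 0 then show ?case by simp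
next
  case (Suc k)
  then have "(f i, f (i+k)) \<in> R^^k" by simp
  moreover have "(f (i+k), f (Suc (i+k))) \<in> R" using assms(1) Suc.prems by simp
  ultimately show ?case by auto
qed

lemma card_relpow:
  fixes R :: "('a\<times>'a) set"
  assumes "\<And>x. finite {y. (x,y)\<in>R} \<and> card {y.(x,y)\<in>R} \<le> D"
  shows "finite {y. (x,y)\<in>R^^k} \<and> card {y.(x,y)\<in>R^^k} \<le> D^k"
proof (induction k)
  case 0
  have "{y. (x,y)\<in>R^^0} = {x}" by auto
  then show ?case by simp
next
  case (Suc k)
  have eq: "{y. (x,y)\<in>R^^Suc k} = (\<Union>z\<in>{y. (x,y)\<in>R^^k}. {y. (z,y)\<in>R})" by auto
  have fin: "finite {y. (x,y)\<in>R^^Suc k}" unfolding eq using Suc assms by auto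
  have "card {y. (x,y)\<in>R^^Suc k} \<le> (\<Sum>z\<in>{y. (x,y)\<in>R^^k}. card {y. (z,y)\<in>R})"
    unfolding eq by (rule card_UN_le) (use Suc in auto)
  also have "\<dots> \<le> (\<Sum>z\<in>{y. (x,y)\<in>R^^k}. D)" by (rule sum_mono) (use assms in auto)
  also have "\<dots> \<le> D^k * D" using Suc by simp
  finally show ?case using fin by (simp add: mult.commute)
qed

lemma big_comp_path:
  assumes deg: "\<And>x. finite {y. (x,y)\<in>R} \<and> card {y.(x,y)\<in>R} \<le> D"
    and big: "card {u. (v,u)\<in>R\<^sup>*} > (\<Sum>k<m. D^k)"
  shows "\<exists>f. inj_on f {0..<m} \<and> (\<forall>i. Suc i < m \<longrightarrow> (f i, f (Suc i)) \<in> R)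
      \<and> (\<forall>i j. j < m \<longrightarrow> Suc i < j \<longrightarrow> (f i, f j) \<notin> R) \<and> (\<forall>i<m. (v, f i) \<in> R\<^sup>*)"
proof -
  have "\<exists>u. (v,u)\<in>R\<^sup>* \<and> (\<forall>k<m. (v,u) \<notin> R^^k)"
  proof (rule ccontr)
    assume "\<not> ?thesis"
    then have sub: "{u. (v,u)\<in>R\<^sup>*} \<subseteq> (\<Union>k<m. {u. (v,u)\<in>R^^k})" by blast
    have "card {u. (v,u)\<in>R\<^sup>*} \<le> card (\<Union>k<m. {u. (v,u)\<in>R^^k})"
      by (rule card_mono) (use card_relpow[OF deg] sub in auto)
    also have "\<dots> \<le> (\<Sum>k<m. card {u. (v,u)\<in>R^^k})" by (rule card_UN_le) auto
    also have "\<dots> \<le> (\<Sum>k<m. D^k)" by (rule sum_mono) (use card_relpow[OF deg] in auto)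
    finally show False using big by simp
  qed
  then obtain u where u: "(v,u)\<in>R\<^sup>*" "\<forall>k<m. (v,u) \<notin> R^^k" by blast
  define n where "n = (LEAST n. (v,u) \<in> R^^n)"
  have ex: "\<exists>n. (v,u) \<in> R^^n" using u(1) rtrancl_power by blast
  have vn: "(v,u) \<in> R^^n" unfolding n_def using ex by (rule LeastI_ex)
  have nmin: "\<And>k. k < n \<Longrightarrow> (v,u) \<notin> R^^k" unfolding n_def using not_less_Least by blast
  have mn: "m \<le> n" using u(2) vn by (meson not_le)
  obtain f where f: "f 0 = v" "f n = u" "\<forall>i<n. (f i, f (Suc i)) \<in> R"
    using vn relpow_fun_conv by metis
  have wk: "\<And>i k. i + k \<le> n \<Longrightarrow> (f i, f (i+k)) \<in> R^^k" using walk_relpow[OF f(3)] by blast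
  have shortcut: "\<And>i j. i \<le> j \<Longrightarrow> j \<le> n \<Longrightarrow> (v, f i) \<in> R^^i \<and> (f j, u) \<in> R^^(n-j)"
  proof -
    fix i j assume "i \<le> j" "j \<le> n"
    then show "(v, f i) \<in> R^^i \<and> (f j, u) \<in> R^^(n-j)"
      using wk[of 0 i] wk[of j "n-j"] f by auto
  qed
  have inj: "inj_on f {0..<m}"
  proof (rule inj_onI)
    fix i j assume ij: "i \<in> {0..<m}" "j \<in> {0..<m}" "f i = f j"
    show "i = j"
    proof (rule ccontr)
      assume "i \<noteq> j"
      then consider "i < j" | "j < i" by linarith
      then show False
      proof cases
        case 1
        have "(v,u) \<in> R^^i O R^^(n-j)" using shortcut[of i j] ij mn 1 by auto
        then have "(v,u) \<in> R^^(i + (n-j))" by (simp add: relpow_add)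
        moreover have "i+(n-j) < n" using 1 ij mn by auto
        ultimately show False using nmin by blast
      next
        case 2
        have "(v,u) \<in> R^^j O R^^(n-i)" using shortcut[of j i] ij mn 2 by auto
        then have "(v,u) \<in> R^^(j + (n-i))" by (simp add: relpow_add)
        moreover have "j+(n-i) < n" using 2 ij mn by auto
        ultimately show False using nmin by blast
      qed
    qed
  qed
  have nochord: "\<forall>i j. j < m \<longrightarrow> Suc i < j \<longrightarrow> (f i, f j) \<notin> R"
  proof (intro allI impI notI)
    fix i j assume ij: "j < m" "Suc i < j" "(f i, f j) \<in> R"
    have "(v,u) \<in> R^^(Suc i) O R^^(n-j)" using shortcut[of i j] ij mn by auto
    then have "(v,u) \<in> R^^(Suc i + (n-j))" by (simp only: relpow_add)
    moreover have "Suc i+(n-j) < n" using ij mn by auto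
    ultimately show False using nmin by blast
  qed
  have reach: "\<forall>i<m. (v, f i) \<in> R\<^sup>*"
    using shortcut mn by (meson less_imp_le_nat order.trans relpow_imp_rtrancl)
  show ?thesis using inj nochord reach f(3) mn by (intro exI[of _ f]) auto
qed



lemma count_ptr:
  fixes S :: "nat set" and s :: nat
  assumes "finite S" "card S = n" "s \<ge> 1" "n \<ge> 1"
  shows "finite (SIGMA M:{M. M \<subseteq> S \<and> n \<le> s * card M}. (S - M) \<rightarrow>\<^sub>E S)
    \<and> real (card (SIGMA M:{M. M \<subseteq> S \<and> n \<le> s * card M}. (S - M) \<rightarrow>\<^sub>E S))
        \<le> 2^n * real n powr (real n - real n / real s)"
proof -
  let ?A = "{M. M \<subseteq> S \<and> n \<le> s * card M}"
  have finA: "finite ?A" using assms(1) by auto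
  have finB: "\<And>M. finite ((S - M) \<rightarrow>\<^sub>E S)" using assms(1) by (simp add: finite_PiE)
  have fin: "finite (SIGMA M:?A. (S - M) \<rightarrow>\<^sub>E S)" using finA finB by auto
  have "card (SIGMA M:?A. (S - M) \<rightarrow>\<^sub>E S) = (\<Sum>M\<in>?A. card ((S - M) \<rightarrow>\<^sub>E S))"
    using finA finB by (simp add: card_SigmaI)
  then have "real (card (SIGMA M:?A. (S - M) \<rightarrow>\<^sub>E S)) = (\<Sum>M\<in>?A. real (card ((S - M) \<rightarrow>\<^sub>E S)))"
    by simp
  also have "\<dots> \<le> (\<Sum>M\<in>?A. real n powr (real n - real n / real s))"
  proof (rule sum_mono)
    fix M assume M: "M \<in> ?A"
    have cM: "card (S - M) = n - card M" using M assms by (metis (no_types, lifting) card_Diff_subset finite_subset mem_Collect_eq)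
    have le: "card M \<le> n" using M assms by (metis (mono_tags, lifting) card_mono mem_Collect_eq)
    have "card ((S - M) \<rightarrow>\<^sub>E S) = n ^ (n - card M)"
      using assms cM by (simp add: card_PiE finite_subset prod_constant)
    then have "real (card ((S - M) \<rightarrow>\<^sub>E S)) = real n powr real (n - card M)"
      using assms by (simp add: powr_realpow)
    also have "\<dots> \<le> real n powr (real n - real n / real s)"
    proof (rule powr_mono)
      have "real n \<le> real s * real (card M)" using M by (metis (mono_tags, lifting) mem_Collect_eq of_nat_le_iff of_nat_mult)
      then have "real n / real s \<le> real (card M)" using assms by (simp add: divide_le_eq mult.commute)
      then show "real (n - card M) \<le> real n - real n / real s" using le by simp
      show "1 \<le> real n" using assms by simp
    qed
    finally show "real (card ((S - M) \<rightarrow>\<^sub>E S)) \<le> real n powr (real n - real n / real s)" .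
  qed
  also have "\<dots> = real (card ?A) * real n powr (real n - real n / real s)" by simp
  also have "\<dots> \<le> 2^n * real n powr (real n - real n / real s)"
  proof (rule mult_right_mono)
    have "card ?A \<le> card (Pow S)" by (rule card_mono) (use assms in auto)
    then show "real (card ?A) \<le> 2^n" using assms by (simp add: card_Pow)
  qed simp
  finally show ?thesis using fin by simp
qed

lemma growth:
  fixes B C :: real and s :: nat
  assumes "B \<ge> 1" "C \<ge> 1" "s \<ge> 1"
  shows "eventually (\<lambda>n::nat. C * B^n * real n powr (real n - real n / real s)
            < real n powr ((1 - 1/(2*real s)) * real n)) sequentially"
proof -
  obtain N1 :: nat where N1: "real N1 \<ge> (2*B) powr (2*real s)" using real_arch_simple by blast
  obtain N2 :: nat where N2: "C < 2 ^ N2" using real_arch_pow[of 2 C] by auto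
  show ?thesis unfolding eventually_sequentially
  proof (intro exI[of _ "N1 + N2 + 1"] allI impI)
    fix n :: nat assume n: "N1 + N2 + 1 \<le> n"
    have npos: "real n > 0" using n by simp
    have "(2*B) powr (2*real s) \<le> real n" using N1 n by linarith
    then have "((2*B) powr (2*real s)) powr (1/(2*real s)) \<le> real n powr (1/(2*real s))"
      using assms by (intro powr_mono2) auto
    then have hB: "2*B \<le> real n powr (1/(2*real s))" using assms by (simp add: powr_powr)
    have "C * B^n < 2^n * B^n"
    proof -
      have "(2::real)^N2 \<le> 2^n" using n by (intro power_increasing) auto
      then have "C < 2^n" using N2 by linarith
      moreover have "B^n > 0" using assms by simp
      ultimately show ?thesis by simp
    qed
    also have "\<dots> = (2*B)^n" by (simp add: power_mult_distrib)
    also have "\<dots> \<le> (real n powr (1/(2*real s)))^n" using hB assms by (intro power_mono) auto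
    also have "\<dots> = real n powr (real n / (2*real s))"
      using npos by (simp add: powr_realpow[symmetric] powr_powr)
    finally have key: "C * B^n < real n powr (real n / (2*real s))" .
    have "C * B^n * real n powr (real n - real n / real s)
          < real n powr (real n / (2*real s)) * real n powr (real n - real n / real s)"
      using key npos by (intro mult_strict_right_mono) auto
    also have "\<dots> = real n powr (real n / (2*real s) + (real n - real n / real s))"
      by (rule powr_add[symmetric])
    also have "real n / (2*real s) + (real n - real n / real s) = (1 - 1/(2*real s)) * real n"
      using assms by (simp add: field_simps)
    finally show "C * B^n * real n powr (real n - real n / real s)
            < real n powr ((1 - 1/(2*real s)) * real n)" .
  qed
qed



definition bagof :: "nat set set \<Rightarrow> nat \<Rightarrow> nat set" where
  "bagof P x = (THE B. B \<in> P \<and> x \<in> B)"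

definition denseP :: "nat \<Rightarrow> ugraph \<Rightarrow> nat set \<Rightarrow> nat set \<Rightarrow> bool" where
  "denseP d G A B \<longleftrightarrow> (\<forall>v\<in>A. card (B - nbhd G v - {v}) \<le> d) \<and> (\<forall>v\<in>B. card (A - nbhd G v - {v}) \<le> d)"

definition flipG :: "ugraph \<Rightarrow> nat set \<Rightarrow> nat set set \<Rightarrow> nat \<Rightarrow> (nat \<times> nat) set" where
  "flipG G V' P d = {(x,y). x \<in> V' \<and> y \<in> V' \<and> x \<noteq> y \<and>
      ((x,y) \<in> edges G \<longleftrightarrow> \<not> denseP d (induced G V') (bagof P x) (bagof P y))}"

lemma bagof_eq:
  assumes "ld_partition G l d P" "B \<in> P" "x \<in> B"
  shows "bagof P x = B"
  unfolding bagof_def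
proof (rule the_equality)
  show "B \<in> P \<and> x \<in> B" using assms by simp
  fix B' assume B': "B' \<in> P \<and> x \<in> B'"
  have disj: "\<forall>A\<in>P. \<forall>B\<in>P. A \<noteq> B \<longrightarrow> A \<inter> B = {}" using assms(1) unfolding ld_partition_def by simp
  show "B' = B" using disj B' assms(2,3) by blast
qed

lemma bagof_in:
  assumes "ld_partition G l d P" "x \<in> verts G"
  shows "bagof P x \<in> P \<and> x \<in> bagof P x"
proof -
  have "\<Union>P = verts G" using assms(1) unfolding ld_partition_def by simp
  then obtain B where "B \<in> P" "x \<in> B" using assms(2) by blast
  then show ?thesis using bagof_eq[OF assms(1)] by simp
qed

lemma verts_induced[simp]: "verts (induced G S) = S" by (simp add: verts_def induced_def)
lemma edges_induced[simp]: "edges (induced G S) = edges G \<inter> (S \<times> S)" by (simp add: edges_def induced_def)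

lemma denseP_sym: "denseP d G A B = denseP d G B A" unfolding denseP_def by blast

lemma flipG_sym:
  assumes "is_graph G" "(x,y) \<in> flipG G V' P d"
  shows "(y,x) \<in> flipG G V' P d"
  using assms unfolding flipG_def is_graph_def using denseP_sym by blast

lemma flipG_sub: "flipG G V' P d \<subseteq> V' \<times> V'" unfolding flipG_def by auto

lemma flipG_deg:
  assumes G: "is_graph G" and V: "V' \<subseteq> verts G" and P: "ld_partition (induced G V') l d P"
  shows "finite {y. (x,y) \<in> flipG G V' P d} \<and> card {y. (x,y) \<in> flipG G V' P d} \<le> l * d"
proof -
  let ?F = "flipG G V' P d"
  let ?Gi = "induced G V'"
  have finV: "finite V'" using G V unfolding is_graph_def by (auto intro: finite_subset)
  have finF: "finite {y. (x,y) \<in> ?F}" using flipG_sub[of G V' P d] finV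
    by (auto intro: finite_subset[of _ V'])
  show ?thesis
  proof (cases "x \<in> V'")
    case False
    then have "{y. (x,y) \<in> ?F} = {}" unfolding flipG_def by auto
    then show ?thesis by simp
  next
    case True
    have UP: "\<Union>P = V'" and finP: "finite P" and cP: "card P \<le> l"
      using P unfolding ld_partition_def by auto
    obtain A where A: "A \<in> P" "x \<in> A" "bagof P x = A" using bagof_in[OF P] True by auto
    have sub: "{y. (x,y) \<in> ?F} \<subseteq> (\<Union>B\<in>P. {y\<in>B. (x,y) \<in> ?F})"
      using UP flipG_sub[of G V' P d] by blast
    have each: "card {y\<in>B. (x,y) \<in> ?F} \<le> d" if B: "B \<in> P" for B
    proof -
      have finB: "finite B" using B UP finV by (meson Sup_upper finite_subset)
      have BV: "B \<subseteq> V'" using B UP by auto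
      have bagB: "\<And>y. y \<in> B \<Longrightarrow> bagof P y = B" using bagof_eq[OF P B] by simp
      show ?thesis
      proof (cases "denseP d ?Gi A B")
        case True
        have "{y\<in>B. (x,y) \<in> ?F} \<subseteq> B - nbhd ?Gi x - {x}"
          using True A bagB unfolding flipG_def nbhd_def by auto
        then have "card {y\<in>B. (x,y) \<in> ?F} \<le> card (B - nbhd ?Gi x - {x})"
          using finB by (intro card_mono) auto
        also have "\<dots> \<le> d" using True A unfolding denseP_def by auto
        finally show ?thesis .
      next
        case False
        then have sp: "\<forall>v\<in>A. card (nbhd ?Gi v \<inter> B) \<le> d"
          using P A(1) B unfolding ld_partition_def denseP_def by blast
        have "{y\<in>B. (x,y) \<in> ?F} \<subseteq> nbhd ?Gi x \<inter> B"
          using False A bagB True BV unfolding flipG_def nbhd_def by auto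
        then have "card {y\<in>B. (x,y) \<in> ?F} \<le> card (nbhd ?Gi x \<inter> B)"
          using finB by (intro card_mono) auto
        also have "\<dots> \<le> d" using sp A by auto
        finally show ?thesis .
      qed
    qed
    have "card {y. (x,y) \<in> ?F} \<le> card (\<Union>B\<in>P. {y\<in>B. (x,y) \<in> ?F})"
      using sub finP finF by (intro card_mono) (auto intro: finite_subset)
    also have "\<dots> \<le> (\<Sum>B\<in>P. card {y\<in>B. (x,y) \<in> ?F})" by (rule card_UN_le[OF finP])
    also have "\<dots> \<le> (\<Sum>B\<in>P. d)" using each by (intro sum_mono) auto
    also have "\<dots> = card P * d" by simp
    also have "\<dots> \<le> l * d" using cP by simp
    finally show ?thesis using finF by simp
  qed
qed



lemma witness:
  assumes H: "hereditary X" and GX: "G \<in> X" and V: "V' \<subseteq> verts G"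
    and P: "ld_partition (induced G V') l d P"
    and inj: "inj_on f {0..<m}" and fV: "\<forall>i<m. f i \<in> V'"
    and cons: "\<forall>i. Suc i < m \<longrightarrow> (f i, f (Suc i)) \<in> flipG G V' P d"
    and nch: "\<forall>i j. j < m \<longrightarrow> Suc i < j \<longrightarrow> (f i, f j) \<notin> flipG G V' P d"
  shows "\<exists>A EH w G. finite A \<and> card A \<le> l \<and> EH \<subseteq> A \<times> A
            \<and> (\<forall>a b. (a, b) \<in> EH \<longrightarrow> (b, a) \<in> EH)
            \<and> length w = m \<and> set w \<subseteq> A
            \<and> G \<in> X \<and> graph_iso G (factor_graph EH w)"
proof -
  let ?F = "flipG G V' P d"
  let ?Gi = "induced G V'"
  have G: "is_graph G" using H GX unfolding hereditary_def by auto
  have finV: "finite V'" using G V unfolding is_graph_def by (auto intro: finite_subset)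
  have UP: "\<Union>P = V'" and finP: "finite P" and cP: "card P \<le> l"
    using P unfolding ld_partition_def by auto
  obtain idx where idx: "bij_betw idx P {0..<card P}" using ex_bij_betw_finite_nat[OF finP] by blast
  define A where "A = {0..<card P}"
  define EH where "EH = {(idx B1, idx B2) | B1 B2. B1 \<in> P \<and> B2 \<in> P \<and> denseP d ?Gi B1 B2}"
  define w where "w = map (\<lambda>i. idx (bagof P (f i))) [0..<m]"
  define T where "T = f ` {0..<m}"
  have TV: "T \<subseteq> verts G" using fV V unfolding T_def by auto
  have G0: "induced G T \<in> X" using H GX TV unfolding hereditary_def by blast
  have bagin: "\<And>i. i < m \<Longrightarrow> bagof P (f i) \<in> P" using bagof_in[OF P] fV by auto
  have EHiff: "\<And>B1 B2. B1 \<in> P \<Longrightarrow> B2 \<in> P \<Longrightarrow> (idx B1, idx B2) \<in> EH \<longleftrightarrow> denseP d ?Gi B1 B2"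
  proof -
    fix B1 B2 assume B: "B1 \<in> P" "B2 \<in> P"
    have ij: "inj_on idx P" using idx bij_betw_def by blast
    show "(idx B1, idx B2) \<in> EH \<longleftrightarrow> denseP d ?Gi B1 B2"
      unfolding EH_def using B inj_onD[OF ij] by blast
  qed
  have wi: "\<And>i. i < m \<Longrightarrow> w ! i = idx (bagof P (f i))" unfolding w_def by simp
  have EHsub: "EH \<subseteq> A \<times> A" unfolding EH_def A_def using idx bij_betw_apply by fastforce
  have EHsym: "\<forall>a b. (a, b) \<in> EH \<longrightarrow> (b, a) \<in> EH" unfolding EH_def using denseP_sym by blast
  have wA: "set w \<subseteq> A" unfolding w_def A_def using bagin idx bij_betw_apply by fastforce
  define h where "h x = Suc (inv_into {0..<m} f x)" for x
  have bf: "bij_betw f {0..<m} T" using inj unfolding T_def by (simp add: inj_on_imp_bij_betw)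
  have binv: "bij_betw (inv_into {0..<m} f) T {0..<m}" using bf by (rule bij_betw_inv_into)
  have bs: "bij_betw Suc {0..<m} {1..m}" by (simp add: bij_betw_def image_Suc_atLeastLessThan atLeastLessThanSuc_atLeastAtMost)
  have bh: "bij_betw h T {1..m}" unfolding h_def using bij_betw_trans[OF binv bs] by (simp add: comp_def)
  have hf: "\<And>i. i < m \<Longrightarrow> h (f i) = Suc i" unfolding h_def using inj by simp
  have edge: "(f i, f j) \<in> edges (induced G T) \<longleftrightarrow> (Suc i, Suc j) \<in> edges (factor_graph EH w)"
    if ij: "i < m" "j < m" for i j
  proof -
    have fT: "f i \<in> T" "f j \<in> T" using ij unfolding T_def by auto
    have lw: "length w = m" unfolding w_def by simp
    have fe: "(Suc i, Suc j) \<in> edges (factor_graph EH w) \<longleftrightarrow> i \<noteq> j \<and>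
        ((nat \<bar>int i - int j\<bar> = 1 \<and> (w ! i, w ! j) \<notin> EH) \<or>
         (nat \<bar>int i - int j\<bar> > 1 \<and> (w ! i, w ! j) \<in> EH))"
      unfolding factor_graph_def edges_def using ij lw by auto
    have Edn: "(w ! i, w ! j) \<in> EH \<longleftrightarrow> denseP d ?Gi (bagof P (f i)) (bagof P (f j))"
      using wi ij EHiff bagin by simp
    have fneq: "i \<noteq> j \<Longrightarrow> f i \<noteq> f j" using inj ij by (meson atLeastLessThan_iff inj_onD zero_le)
    have fVV: "f i \<in> V'" "f j \<in> V'" using fV ij by auto
    show ?thesis
    proof (cases "i = j")
      case True
      then show ?thesis using fe G unfolding is_graph_def by simp
    next
      case False
      then have ne: "f i \<noteq> f j" using fneq by simp
      show ?thesis
      proof (cases "nat \<bar>int i - int j\<bar> = 1")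
        case True
        have inF: "(f i, f j) \<in> ?F"
        proof (cases "j = Suc i")
          case True then show ?thesis using cons ij by simp
        next
          case False
          then have "i = Suc j" using \<open>nat \<bar>int i - int j\<bar> = 1\<close> by linarith
          then show ?thesis using cons ij flipG_sym[OF G] by simp
        qed
        then have "(f i, f j) \<in> edges G \<longleftrightarrow> \<not> denseP d ?Gi (bagof P (f i)) (bagof P (f j))"
          unfolding flipG_def by simp
        then show ?thesis using fe True Edn fT False by simp
      next
        case False2: False
        then have gt: "nat \<bar>int i - int j\<bar> > 1" using False by linarith
        have nF: "(f i, f j) \<notin> ?F"
        proof (cases "i < j")
          case True then show ?thesis using nch ij gt by auto
        next
          case False
          then have "(f j, f i) \<notin> ?F" using nch ij gt by auto
          then show ?thesis using flipG_sym[OF G] by blast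
        qed
        then have "(f i, f j) \<in> edges G \<longleftrightarrow> denseP d ?Gi (bagof P (f i)) (bagof P (f j))"
          using ne fVV unfolding flipG_def by auto
        then show ?thesis using fe gt Edn fT False by auto
      qed
    qed
  qed
  have iso: "graph_iso (induced G T) (factor_graph EH w)"
    unfolding graph_iso_def
  proof (intro exI[of _ h] conjI ballI)
    show "bij_betw h (verts (induced G T)) (verts (factor_graph EH w))"
    proof -
      have "verts (factor_graph EH w) = {1..m}" by (simp add: factor_graph_def verts_def w_def)
      then show ?thesis using bh by simp
    qed
    fix x y assume "x \<in> verts (induced G T)" "y \<in> verts (induced G T)"
    then obtain i j where ij: "i < m" "j < m" "x = f i" "y = f j" unfolding T_def by auto
    show "(x, y) \<in> edges (induced G T) \<longleftrightarrow> (h x, h y) \<in> edges (factor_graph EH w)"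
      using edge[OF ij(1,2)] hf ij by simp
  qed
  have "finite A" "card A \<le> l" "length w = m" using cP by (auto simp: A_def w_def)
  then show ?thesis using EHsub EHsym wA G0 iso
    by (intro exI[of _ A] exI[of _ EH] exI[of _ w] exI[of _ "induced G T"] conjI) assumption+
qed



type_synonym lab = "bool \<times> nat set \<times> nat \<times> nat set"
type_synonym code = "(nat \<Rightarrow> lab) \<times> (nat\<times>nat) set \<times> (nat set \<times> (nat \<Rightarrow> nat))"

definition rD :: "nat set \<Rightarrow> (nat \<Rightarrow> nat) \<Rightarrow> nat \<Rightarrow> nat" where
  "rD M g v = (if v \<in> M then v else g v)"
definition RsD :: "nat \<Rightarrow> (nat \<Rightarrow> lab) \<Rightarrow> nat set" where
  "RsD n L = {v\<in>{1..n}. fst (L v)}"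
definition rlD :: "nat \<Rightarrow> (nat \<Rightarrow> lab) \<Rightarrow> nat list" where
  "rlD n L = sorted_list_of_set (RsD n L)"
definition clD :: "nat \<Rightarrow> nat set \<Rightarrow> (nat \<Rightarrow> nat) \<Rightarrow> nat \<Rightarrow> nat list" where
  "clD n M g v = sorted_list_of_set {u\<in>{1..n}. rD M g u = rD M g v}"
definition decP :: "nat \<Rightarrow> (nat \<Rightarrow> lab) \<Rightarrow> (nat\<times>nat) set \<Rightarrow> nat set \<Rightarrow> (nat \<Rightarrow> nat) \<Rightarrow> nat \<Rightarrow> nat \<Rightarrow> bool" where
  "decP n L EHc M g v u = (if v \<in> RsD n L \<or> u \<in> RsD n L then
      ((u \<in> RsD n L \<and> (\<exists>i\<in>fst (snd (L v)). i < length (rlD n L) \<and> rlD n L ! i = u)) \<or>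
       (v \<in> RsD n L \<and> (\<exists>i\<in>fst (snd (L u)). i < length (rlD n L) \<and> rlD n L ! i = v)))
    else (v \<noteq> u \<and> ((rD M g u = rD M g v \<and> (\<exists>i\<in>snd (snd (snd (L v))). i < length (clD n M g v) \<and> clD n M g v ! i = u))
        \<longleftrightarrow> (fst (snd (snd (L v))), fst (snd (snd (L u)))) \<notin> EHc)))"
definition decE :: "nat \<Rightarrow> code \<Rightarrow> (nat\<times>nat) set" where
  "decE n cd = (case cd of (L, EHc, (M, g)) \<Rightarrow> {(v,u). v \<in> {1..n} \<and> u \<in> {1..n} \<and> decP n L EHc M g v u})"

definition Lab :: "nat \<Rightarrow> nat \<Rightarrow> nat \<Rightarrow> lab set" where
  "Lab c l s = UNIV \<times> Pow {0..<c} \<times> {0..l} \<times> Pow {0..<s}"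

definition CodeSet :: "nat \<Rightarrow> nat \<Rightarrow> nat \<Rightarrow> nat \<Rightarrow> code set" where
  "CodeSet n c l s = ({1..n} \<rightarrow>\<^sub>E Lab c l s) \<times> Pow ({0..l}\<times>{0..l}) \<times>
      (SIGMA M:{M. M \<subseteq> {1..n} \<and> n \<le> s * card M}. ({1..n} - M) \<rightarrow>\<^sub>E {1..n})"

lemma encode:
  assumes G: "is_graph ({1..n}, E)" and V: "V' \<subseteq> {1..n}"
    and P: "ld_partition (induced ({1..n}, E) V') l d P" and cR: "card ({1..n} - V') < c"
    and small: "\<forall>v. card {u. (v,u) \<in> (flipG ({1..n}, E) V' P d)\<^sup>*} \<le> s" and s1: "s \<ge> 1"
  shows "\<exists>cd \<in> CodeSet n c l s. decE n cd = E"
proof -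
  define S where "S = {1..n::nat}"
  define Gr where "Gr = (S, E)"
  define F where "F = flipG Gr V' P d"
  define Gi where "Gi = induced Gr V'"
  have Gr: "is_graph Gr" using G unfolding Gr_def S_def by simp
  have PV: "ld_partition Gi l d P" using P unfolding Gi_def Gr_def S_def by simp
  have ES: "E \<subseteq> S \<times> S" and Esym: "\<And>u v. (u,v) \<in> E \<Longrightarrow> (v,u) \<in> E" and Eirr: "\<And>v. (v,v) \<notin> E"
    using G unfolding is_graph_def S_def verts_def edges_def by auto
  have edG: "edges Gr = E" unfolding Gr_def edges_def by simp
  have finS: "finite S" unfolding S_def by simp
  have VS: "V' \<subseteq> S" using V unfolding S_def .
  have finV: "finite V'" using VS finS finite_subset by blast
  have UP: "\<Union>P = V'" and finP: "finite P" and cP: "card P \<le> l"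
    using PV unfolding ld_partition_def Gi_def by auto
  have FV: "F \<subseteq> V' \<times> V'" unfolding F_def by (rule flipG_sub)
  have Fsym: "\<And>x y. (x,y) \<in> F \<Longrightarrow> (y,x) \<in> F" unfolding F_def using flipG_sym[OF Gr] by blast
  define comp where "comp v = {u. (v,u) \<in> F\<^sup>*}" for v
  have compV: "\<And>v u. (v,u) \<in> F\<^sup>* \<Longrightarrow> u = v \<or> u \<in> V'"
  proof -
    fix v u assume "(v,u) \<in> F\<^sup>*"
    then show "u = v \<or> u \<in> V'" by (induction rule: rtrancl_induct) (use FV in auto)
  qed
  have compS: "\<And>v. v \<in> S \<Longrightarrow> comp v \<subseteq> S" using compV VS unfolding comp_def by blast
  have compfin: "\<And>v. finite (comp v)"
  proof -
    fix v have "comp v \<subseteq> insert v V'" using compV unfolding comp_def by blast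
    then show "finite (comp v)" using finV finite_subset by blast
  qed
  have compin: "\<And>v. v \<in> comp v" unfolding comp_def by simp
  have Fstar_sym: "\<And>x y. (x,y) \<in> F\<^sup>* \<Longrightarrow> (y,x) \<in> F\<^sup>*"
  proof -
    have "sym F" using Fsym by (simp add: symI)
    then have "sym (F\<^sup>*)" by (rule sym_rtrancl)
    then show "\<And>x y. (x,y) \<in> F\<^sup>* \<Longrightarrow> (y,x) \<in> F\<^sup>*" by (meson symD)
  qed
  have compeq: "\<And>v u. u \<in> comp v \<Longrightarrow> comp u = comp v"
  proof -
    fix v u assume "u \<in> comp v"
    then have vu: "(v,u) \<in> F\<^sup>*" and uv: "(u,v) \<in> F\<^sup>*" unfolding comp_def using Fstar_sym by auto
    show "comp u = comp v"
    proof
      show "comp u \<subseteq> comp v" unfolding comp_def using vu rtrancl_trans[of v u] by blast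
      show "comp v \<subseteq> comp u" unfolding comp_def using uv rtrancl_trans[of u v] by blast
    qed
  qed
  have compsmall: "\<And>v. card (comp v) \<le> s" using small unfolding comp_def F_def Gr_def S_def by simp
  define r where "r v = Min (comp v)" for v
  have rin: "\<And>v. r v \<in> comp v" unfolding r_def using compfin compin by (intro Min_in) auto
  have req: "\<And>v u. r u = r v \<longleftrightarrow> u \<in> comp v"
  proof
    fix v u assume "r u = r v"
    then have "comp (r u) = comp u" "comp (r u) = comp v" using rin compeq by metis+
    then show "u \<in> comp v" using compin by metis
  next
    fix v u assume "u \<in> comp v"
    then show "r u = r v" using compeq unfolding r_def by simp
  qed
  define M where "M = {v\<in>S. r v = v}"
  define g where "g = restrict r (S - M)"
  have rS: "\<And>v. v \<in> S \<Longrightarrow> r v \<in> S" using rin compS by blast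
  have gin: "g \<in> (S - M) \<rightarrow>\<^sub>E S" unfolding g_def using rS by auto
  have rr: "\<And>v. r (r v) = r v" using req rin by blast
  have SU: "S \<subseteq> (\<Union>x\<in>M. comp x)"
  proof
    fix v assume v: "v \<in> S"
    have "r v \<in> M" unfolding M_def using rS[OF v] rr by simp
    moreover have "v \<in> comp (r v)" using req rr by metis
    ultimately show "v \<in> (\<Union>x\<in>M. comp x)" by blast
  qed
  have finM: "finite M" unfolding M_def using finS by simp
  have "card S \<le> card (\<Union>x\<in>M. comp x)" using SU finM compfin by (intro card_mono) auto
  also have "\<dots> \<le> (\<Sum>x\<in>M. card (comp x))" by (rule card_UN_le[OF finM])
  also have "\<dots> \<le> (\<Sum>x\<in>M. s)" using compsmall by (intro sum_mono) auto
  finally have nM: "n \<le> s * card M" unfolding S_def by (simp add: mult.commute)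
  have Mcode: "(M, g) \<in> (SIGMA M:{M. M \<subseteq> {1..n} \<and> n \<le> s * card M}. ({1..n} - M) \<rightarrow>\<^sub>E {1..n})"
    using nM gin unfolding M_def S_def by auto
  have r'eq: "\<And>v. v \<in> S \<Longrightarrow> (if v \<in> M then v else g v) = r v" unfolding M_def g_def by auto
  
  define R where "R = S - V'"
  define rl where "rl = sorted_list_of_set R"
  have finR: "finite R" unfolding R_def using finS by simp
  have setrl: "set rl = R" and lenrl: "length rl = card R" using finR unfolding rl_def by auto
  have cRc: "card R < c" using cR unfolding R_def S_def .
  
  obtain idx where idx: "bij_betw idx P {0..<card P}" using ex_bij_betw_finite_nat[OF finP] by blast
  have idxinj: "inj_on idx P" using idx bij_betw_def by blast
  define EHc where "EHc = {(idx B1, idx B2) | B1 B2. B1 \<in> P \<and> B2 \<in> P \<and> denseP d Gi B1 B2}"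
  define bidx where "bidx v = (if v \<in> V' then idx (bagof P v) else 0)" for v
  have bagin: "\<And>v. v \<in> V' \<Longrightarrow> bagof P v \<in> P" using bagof_in[OF PV] unfolding Gi_def by simp
  have EHcsub: "EHc \<subseteq> {0..l}\<times>{0..l}" unfolding EHc_def using idx cP bij_betw_apply by fastforce
  have EHiff: "\<And>v u. v \<in> V' \<Longrightarrow> u \<in> V' \<Longrightarrow> (bidx v, bidx u) \<in> EHc \<longleftrightarrow> denseP d Gi (bagof P v) (bagof P u)"
  proof -
    fix v u assume "v \<in> V'" "u \<in> V'"
    then show "(bidx v, bidx u) \<in> EHc \<longleftrightarrow> denseP d Gi (bagof P v) (bagof P u)"
      unfolding EHc_def bidx_def using bagin inj_onD[OF idxinj] by auto blast+
  qed
  define cl where "cl v = sorted_list_of_set (comp v)" for v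
  have setcl: "\<And>v. set (cl v) = comp v" and lencl: "\<And>v. length (cl v) = card (comp v)"
    using compfin unfolding cl_def by auto
  define L where "L v = (v \<in> R, {i. i < length rl \<and> (v, rl!i) \<in> E}, bidx v, {i. i < length (cl v) \<and> (v, cl v ! i) \<in> F})" for v
  have Lin: "restrict L S \<in> S \<rightarrow>\<^sub>E Lab c l s"
  proof -
    have "L v \<in> Lab c l s" for v
    proof -
      have "bidx v \<le> l" unfolding bidx_def using idx cP bagin bij_betw_apply by fastforce
      moreover have "length rl < c" using lenrl cRc by simp
      moreover have "length (cl v) \<le> s" using lencl compsmall by simp
      ultimately show ?thesis unfolding Lab_def L_def by auto
    qed
    then show ?thesis by auto
  qed
  define cd where "cd = (restrict L S, EHc, (M, g))"
  have cdin: "cd \<in> CodeSet n c l s" unfolding cd_def CodeSet_def using Lin EHcsub Mcode unfolding S_def by auto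
  have dec: "decE n cd = E"
  proof -
    have Rs: "RsD n (restrict L S) = R" unfolding RsD_def L_def R_def S_def by auto
    have rl': "rlD n (restrict L S) = rl" unfolding rlD_def Rs rl_def ..
    have rD': "\<And>v. v \<in> S \<Longrightarrow> rD M g v = r v" using r'eq unfolding rD_def by simp
    have clS: "\<And>v. v \<in> S \<Longrightarrow> clD n M g v = cl v"
    proof -
      fix v assume v: "v \<in> S"
      have "{u\<in>{1..n}. rD M g u = rD M g v} = {u\<in>S. r u = r v}"
        using rD' v unfolding S_def by auto
      also have "\<dots> = comp v" using req compS[OF v] by blast
      finally show "clD n M g v = cl v" unfolding clD_def cl_def by simp
    qed
    have sideR: "\<And>v u. u \<in> R \<Longrightarrow> (\<exists>i\<in>{i. i < length rl \<and> (v, rl!i) \<in> E}. i < length rl \<and> rl!i = u) \<longleftrightarrow> (v,u) \<in> E"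
      using setrl by (auto simp: in_set_conv_nth)
    have Fiff: "\<And>v u. v \<in> S \<Longrightarrow> ((r u = r v \<and> (\<exists>i\<in>{i. i < length (cl v) \<and> (v, cl v ! i) \<in> F}. i<length (cl v) \<and> cl v ! i = u)) \<longleftrightarrow> (v,u) \<in> F)"
    proof -
      fix v u assume v: "v \<in> S"
      show "(r u = r v \<and> (\<exists>i\<in>{i. i < length (cl v) \<and> (v, cl v ! i) \<in> F}. i<length (cl v) \<and> cl v ! i = u)) \<longleftrightarrow> (v,u) \<in> F"
      proof
        assume "(v,u) \<in> F"
        then have uc: "u \<in> comp v" unfolding comp_def by auto
        then have "u \<in> set (cl v)" using setcl by simp
        then obtain i where "i < length (cl v)" "cl v ! i = u" by (auto simp: in_set_conv_nth)
        then show "r u = r v \<and> (\<exists>i\<in>{i. i < length (cl v) \<and> (v, cl v ! i) \<in> F}. i<length (cl v) \<and> cl v ! i = u)"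
          using uc req \<open>(v,u) \<in> F\<close> by auto
      qed auto
    qed
    show ?thesis
    proof (rule set_eqI, clarify)
      fix v u
      have mem: "(v,u) \<in> decE n cd \<longleftrightarrow> v \<in> S \<and> u \<in> S \<and> decP n (restrict L S) EHc M g v u"
        unfolding decE_def cd_def S_def by simp
      show "(v,u) \<in> decE n cd \<longleftrightarrow> (v,u) \<in> E"
      proof (cases "v \<in> S \<and> u \<in> S")
        case False
        then have "(v,u) \<notin> E" using ES by auto
        then show ?thesis using False mem by blast
      next
        case True
        then have vS: "v \<in> S" and uS: "u \<in> S" by auto
        have Lv: "restrict L S v = L v" and Lu: "restrict L S u = L u" using vS uS by auto
        show ?thesis
        proof (cases "v \<in> R \<or> u \<in> R")
          case True
          have "(v,u) \<in> decE n cd \<longleftrightarrow> ((u\<in>R \<and> (\<exists>i\<in>{i. i < length rl \<and> (v, rl!i) \<in> E}. i < length rl \<and> rl!i = u)) \<or> (v\<in>R \<and> (\<exists>i\<in>{i. i < length rl \<and> (u, rl!i) \<in> E}. i<length rl \<and> rl!i = v)))"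
            unfolding mem decP_def Rs rl' Lv Lu using vS uS True by (simp add: L_def)
          also have "\<dots> \<longleftrightarrow> (v,u) \<in> E" using sideR True Esym by blast
          finally show ?thesis .
        next
          case False
          then have vV: "v \<in> V'" and uV: "u \<in> V'" using vS uS unfolding R_def by auto
          have "(v,u) \<in> decE n cd \<longleftrightarrow> (v\<noteq>u \<and> ((r u = r v \<and> (\<exists>i\<in>{i. i < length (cl v) \<and> (v, cl v ! i) \<in> F}. i<length (cl v) \<and> cl v ! i = u)) \<longleftrightarrow> (bidx v, bidx u) \<notin> EHc))"
            unfolding mem decP_def Rs Lv Lu clS[OF vS] rD'[OF vS] rD'[OF uS] using vS uS False by (simp add: L_def)
          also have "\<dots> \<longleftrightarrow> (v\<noteq>u \<and> ((v,u) \<in> F \<longleftrightarrow> \<not> denseP d Gi (bagof P v) (bagof P u)))"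
            using Fiff[OF vS] EHiff[OF vV uV] by blast
          also have "\<dots> \<longleftrightarrow> (v,u) \<in> E"
            using vV uV Eirr unfolding F_def flipG_def edG Gi_def by auto
          finally show ?thesis .
        qed
      qed
    qed
  qed
  show ?thesis using cdin dec by blast
qed



theorem lemma3p11:
  fixes \<X> :: "ugraph set" and l d c :: nat
  assumes "hereditary \<X>"
    and "speed_above_bell \<X>"
    and "finite_distinguishing_number \<X>"
    and "\<forall>G\<in>\<X>. \<exists>V'\<subseteq>verts G. strong_ld_graph (induced G V') l d \<and> card (verts G - V') < c"
  shows "\<forall>m::nat. m > 0 \<longrightarrow> (\<exists>A EH w G. finite A \<and> card A \<le> l \<and> EH \<subseteq> A \<times> A
            \<and> (\<forall>a b. (a, b) \<in> EH \<longrightarrow> (b, a) \<in> EH)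
            \<and> length w = m \<and> set w \<subseteq> A
            \<and> G \<in> \<X> \<and> graph_iso G (factor_graph EH w))"
proof (intro allI impI)
  fix m :: nat assume m0: "m > 0"
  note H = assms(1)
  show "\<exists>A EH w G. finite A \<and> card A \<le> l \<and> EH \<subseteq> A \<times> A
            \<and> (\<forall>a b. (a, b) \<in> EH \<longrightarrow> (b, a) \<in> EH)
            \<and> length w = m \<and> set w \<subseteq> A
            \<and> G \<in> \<X> \<and> graph_iso G (factor_graph EH w)" (is "?W")
  proof (rule ccontr)
    assume nowit: "\<not> ?W"
    define D where "D = l * d"
    define s where "s = (\<Sum>k<m. D^k)"
    have s1: "s \<ge> 1"
    proof -
      have "D^0 \<le> (\<Sum>k<m. D^k)" by (rule member_le_sum) (use m0 in auto)
      then show ?thesis unfolding s_def by simp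
    qed
    have small: "\<forall>v. card {u. (v,u) \<in> (flipG G V' P d)\<^sup>*} \<le> s"
      if GX: "G \<in> \<X>" and V: "V' \<subseteq> verts G" and P: "ld_partition (induced G V') l d P" for G V' P
    proof (rule ccontr)
      assume "\<not> (\<forall>v. card {u. (v,u) \<in> (flipG G V' P d)\<^sup>*} \<le> s)"
      then obtain v where big: "card {u. (v,u) \<in> (flipG G V' P d)\<^sup>*} > s" by (auto simp: not_le)
      let ?F = "flipG G V' P d"
      have Gg: "is_graph G" using H GX unfolding hereditary_def by blast
      have FV: "?F \<subseteq> V' \<times> V'" by (rule flipG_sub)
      have reachV: "\<And>u. (v,u) \<in> ?F\<^sup>* \<Longrightarrow> u = v \<or> u \<in> V'"
      proof -
        fix u assume "(v,u) \<in> ?F\<^sup>*"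
        then show "u = v \<or> u \<in> V'" by (induction rule: rtrancl_induct) (use FV in auto)
      qed
      have vV: "v \<in> V'"
      proof (rule ccontr)
        assume nv: "v \<notin> V'"
        have "{u. (v,u) \<in> ?F\<^sup>*} \<subseteq> {v}"
        proof
          fix u assume "u \<in> {u. (v,u) \<in> ?F\<^sup>*}"
          then have "(v,u) \<in> ?F\<^sup>*" by simp
          then show "u \<in> {v}"
            by (cases rule: converse_rtranclE) (use FV nv in auto)
        qed
        then have "card {u. (v,u) \<in> ?F\<^sup>*} \<le> card {v}" by (intro card_mono) auto
        then show False using big s1 by simp
      qed
      have deg: "\<And>x. finite {y. (x,y)\<in>?F} \<and> card {y.(x,y)\<in>?F} \<le> D"
        unfolding D_def by (rule flipG_deg[OF Gg V P])
      obtain f where f: "inj_on f {0..<m}" "\<forall>i. Suc i < m \<longrightarrow> (f i, f (Suc i)) \<in> ?F"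
          "\<forall>i j. j < m \<longrightarrow> Suc i < j \<longrightarrow> (f i, f j) \<notin> ?F" "\<forall>i<m. (v, f i) \<in> ?F\<^sup>*"
        using big_comp_path[OF deg, of m v] big unfolding s_def by blast
      have fV: "\<forall>i<m. f i \<in> V'" using f(4) reachV vV by blast
      show False using witness[OF H GX V P f(1) fV f(2) f(3)] nowit by blast
    qed
    obtain K where K: "K = card (Lab c l s)" by simp
    obtain C where C: "C = card (Pow ({0..l}\<times>{0..l}) :: (nat\<times>nat) set set)" by simp
    have finLab: "finite (Lab c l s)" unfolding Lab_def by simp
    have K1: "K \<ge> 1"
    proof -
      have "(True, {}, 0, {}) \<in> Lab c l s" unfolding Lab_def by simp
      then show ?thesis using K finLab by (metis card_0_eq empty_iff less_one not_le)
    qed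
    have C1: "C \<ge> 1" using C by (simp add: card_Pow)
    have bound: "real (speed \<X> n) \<le> real C * real (2*K)^n * real n powr (real n - real n / real s)"
      if n1: "n \<ge> 1" for n
    proof -
      let ?S = "{1..n::nat}"
      let ?A3 = "SIGMA M:{M. M \<subseteq> ?S \<and> n \<le> s * card M}. (?S - M) \<rightarrow>\<^sub>E ?S"
      have cp: "finite ?A3 \<and> real (card ?A3) \<le> 2^n * real n powr (real n - real n / real s)"
        using count_ptr[of ?S n s] s1 n1 by simp
      have finA1: "finite (?S \<rightarrow>\<^sub>E Lab c l s)" using finLab by (simp add: finite_PiE)
      have cA1: "card (?S \<rightarrow>\<^sub>E Lab c l s) = K^n" using K by (simp add: card_PiE)
      have finCS: "finite (CodeSet n c l s)" unfolding CodeSet_def using finA1 cp by simp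
      have cCS: "card (CodeSet n c l s) = K^n * (C * card ?A3)"
        unfolding CodeSet_def C using cA1 by (simp add: card_cartesian_product)
      have sub: "{E. (?S, E) \<in> \<X>} \<subseteq> decE n ` CodeSet n c l s"
      proof
        fix E assume "E \<in> {E. (?S, E) \<in> \<X>}"
        then have GX: "(?S, E) \<in> \<X>" by simp
        have Gg: "is_graph (?S, E)" using H GX unfolding hereditary_def by blast
        obtain V' where V': "V' \<subseteq> ?S" "strong_ld_graph (induced (?S, E) V') l d" "card (?S - V') < c"
          using assms(4) GX by (auto simp: verts_def)
        obtain P where P: "ld_partition (induced (?S, E) V') l d P"
          using V'(2) unfolding strong_ld_graph_def strong_ld_partition_def by blast
        have sm: "\<forall>v. card {u. (v,u) \<in> (flipG (?S, E) V' P d)\<^sup>*} \<le> s"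
          using small[OF GX _ P] V'(1) by (simp add: verts_def)
        obtain cd where "cd \<in> CodeSet n c l s" "decE n cd = E"
          using encode[OF Gg V'(1) P V'(3) sm s1] by blast
        then show "E \<in> decE n ` CodeSet n c l s" by (metis image_eqI)
      qed
      have "speed \<X> n \<le> card (decE n ` CodeSet n c l s)"
        unfolding speed_def using sub finCS by (intro card_mono) auto
      also have "\<dots> \<le> card (CodeSet n c l s)" using finCS by (rule card_image_le)
      finally have "speed \<X> n \<le> K ^ n * (C * card ?A3)" using cCS by simp
      then have "real (speed \<X> n) \<le> real (K ^ n * (C * card ?A3))" by (rule of_nat_mono)
      then have "real (speed \<X> n) \<le> real K ^ n * (real C * real (card ?A3))" by simp
      also have "\<dots> \<le> real K ^ n * (real C * (2^n * real n powr (real n - real n / real s)))"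
        using cp by (intro mult_left_mono) auto
      also have "\<dots> = real C * real (2*K)^n * real n powr (real n - real n / real s)"
        by (simp add: power_mult_distrib)
      finally show ?thesis .
    qed
    have ev1: "eventually (\<lambda>n. real C * real (2*K)^n * real n powr (real n - real n / real s)
            < real n powr ((1 - 1/(2*real s)) * real n)) sequentially"
      using growth[of "real (2*K)" "real C" s] K1 C1 s1 by simp
    have ev2: "eventually (\<lambda>n. real (speed \<X> n) \<ge> real n powr ((1 - 1/(2*real s)) * real n)) sequentially"
      using assms(2) s1 unfolding speed_above_bell_def by simp
    have ev3: "eventually (\<lambda>n::nat. n \<ge> 1) sequentially" by (rule eventually_ge_at_top)
    have "eventually (\<lambda>n::nat. False) sequentially"
      using ev1 ev2 ev3
    proof eventually_elim
      case (elim n)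
      then show ?case using bound[of n] by linarith
    qed
    then show False by simp
  qed
qed

end
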